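(* Let $\varphi : X \to X$ be a morphism in $\mathscr{C}$ and let $n\geq 2$ be an integer. Then $\varphi$ is core invertible if and only if there exists an annihilator $\eta : N\to X$ of $\varphi$ such that $\mu=\varphi^{n}+\eta^{*}\eta : X\to X$ is invertible. In this case $$\varphi^{\mathrm{core}}=\varphi^{n-1}\mu^{-1}.$$
   Context: $\mathscr{C}$ is an additive category with an involution $*$: a map on morphisms sending $\varphi : X\to Y$ to $\varphi^* : Y \to X$ such that $(\varphi^* )^*=\varphi$, $(\varphi\psi)^*=\psi^*\varphi^*$ and $(\varphi+\phi)^*=\varphi^*+\phi^*$. Composition is written left to right: for $\varphi : X\to Y$ and $\psi : Y\to Z$, $\varphi\psi : X \to Z$ means "first $\varphi$, then $\psi$". An annihilator of $\varphi : X\to Y$ is any morphism $\eta : N\to X$, for any object $N$, with $\eta\varphi=0$. A morphism is invertible if it has a two-sided inverse. For $\varphi : X\to X$, a core inverse of $\varphi$ is a morphism $\chi : X\to X$ with $(\varphi\chi)^*=\varphi\chi$, $\varphi\chi^2=\chi$ and $\chi\varphi^2=\varphi$. It is unique when it exists and is denoted $\varphi^{\mathrm{core}}$. *)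

theory Defs
  imports Main
begin

text \<open>An additive category with involution, given concretely.
  Composition is diagrammatic: Comp f g means first f, then g.\<close>

record ('o, 'm) icat =
  Ob   :: "'o set"
  Mor  :: "'m set"
  Dom  :: "'m \<Rightarrow> 'o"
  Cod  :: "'m \<Rightarrow> 'o"
  Comp :: "'m \<Rightarrow> 'm \<Rightarrow> 'm"
  Idm  :: "'o \<Rightarrow> 'm"
  Add  :: "'m \<Rightarrow> 'm \<Rightarrow> 'm"
  Zero :: "'o \<Rightarrow> 'o \<Rightarrow> 'm"
  Neg  :: "'m \<Rightarrow> 'm"
  Star :: "'m \<Rightarrow> 'm"

definition Hom :: "('o, 'm) icat \<Rightarrow> 'o \<Rightarrow> 'o \<Rightarrow> 'm set" where
  "Hom C X Y = {f \<in> Mor C. Dom C f = X \<and> Cod C f = Y}"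

definition is_category :: "('o, 'm) icat \<Rightarrow> bool" where
  "is_category C \<longleftrightarrow>
     (\<forall>f \<in> Mor C. Dom C f \<in> Ob C \<and> Cod C f \<in> Ob C)
   \<and> (\<forall>X \<in> Ob C. Idm C X \<in> Hom C X X)
   \<and> (\<forall>f \<in> Mor C. \<forall>g \<in> Mor C. Cod C f = Dom C g \<longrightarrow>
          Comp C f g \<in> Hom C (Dom C f) (Cod C g))
   \<and> (\<forall>f \<in> Mor C. \<forall>g \<in> Mor C. \<forall>h \<in> Mor C. Cod C f = Dom C g \<longrightarrow> Cod C g = Dom C h \<longrightarrow>
          Comp C (Comp C f g) h = Comp C f (Comp C g h))
   \<and> (\<forall>f \<in> Mor C. Comp C (Idm C (Dom C f)) f = f \<and> Comp C f (Idm C (Cod C f)) = f)"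

definition is_preadditive :: "('o, 'm) icat \<Rightarrow> bool" where
  "is_preadditive C \<longleftrightarrow> is_category C
   \<and> (\<forall>X \<in> Ob C. \<forall>Y \<in> Ob C.
        Zero C X Y \<in> Hom C X Y
      \<and> (\<forall>f \<in> Hom C X Y. \<forall>g \<in> Hom C X Y. Add C f g \<in> Hom C X Y)
      \<and> (\<forall>f \<in> Hom C X Y. Neg C f \<in> Hom C X Y)
      \<and> (\<forall>f \<in> Hom C X Y. \<forall>g \<in> Hom C X Y. \<forall>h \<in> Hom C X Y.
            Add C (Add C f g) h = Add C f (Add C g h))
      \<and> (\<forall>f \<in> Hom C X Y. \<forall>g \<in> Hom C X Y. Add C f g = Add C g f)
      \<and> (\<forall>f \<in> Hom C X Y. Add C (Zero C X Y) f = f)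
      \<and> (\<forall>f \<in> Hom C X Y. Add C (Neg C f) f = Zero C X Y))
   \<and> (\<forall>f \<in> Mor C. \<forall>g \<in> Mor C. \<forall>h \<in> Mor C.
        Dom C f = Dom C g \<longrightarrow> Cod C f = Cod C g \<longrightarrow> Cod C f = Dom C h \<longrightarrow>
          Comp C (Add C f g) h = Add C (Comp C f h) (Comp C g h))
   \<and> (\<forall>f \<in> Mor C. \<forall>g \<in> Mor C. \<forall>h \<in> Mor C.
        Dom C g = Dom C h \<longrightarrow> Cod C g = Cod C h \<longrightarrow> Cod C f = Dom C g \<longrightarrow>
          Comp C f (Add C g h) = Add C (Comp C f g) (Comp C f h))"

definition is_additive :: "('o, 'm) icat \<Rightarrow> bool" where
  "is_additive C \<longleftrightarrow> is_preadditive C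
   \<and> (\<exists>Z \<in> Ob C. Idm C Z = Zero C Z Z)
   \<and> (\<forall>X \<in> Ob C. \<forall>Y \<in> Ob C. \<exists>P \<in> Ob C. \<exists>i1 i2 p1 p2.
        i1 \<in> Hom C X P \<and> i2 \<in> Hom C Y P \<and> p1 \<in> Hom C P X \<and> p2 \<in> Hom C P Y
      \<and> Comp C i1 p1 = Idm C X \<and> Comp C i2 p2 = Idm C Y
      \<and> Comp C i1 p2 = Zero C X Y \<and> Comp C i2 p1 = Zero C Y X
      \<and> Add C (Comp C p1 i1) (Comp C p2 i2) = Idm C P)"

definition is_involutive_additive :: "('o, 'm) icat \<Rightarrow> bool" where
  "is_involutive_additive C \<longleftrightarrow> is_additive C
   \<and> (\<forall>f \<in> Mor C. Star C f \<in> Hom C (Cod C f) (Dom C f))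
   \<and> (\<forall>f \<in> Mor C. Star C (Star C f) = f)
   \<and> (\<forall>f \<in> Mor C. \<forall>g \<in> Mor C. Cod C f = Dom C g \<longrightarrow>
        Star C (Comp C f g) = Comp C (Star C g) (Star C f))
   \<and> (\<forall>f \<in> Mor C. \<forall>g \<in> Mor C. Dom C f = Dom C g \<longrightarrow> Cod C f = Cod C g \<longrightarrow>
        Star C (Add C f g) = Add C (Star C f) (Star C g))"

fun mpow :: "('o, 'm) icat \<Rightarrow> 'm \<Rightarrow> nat \<Rightarrow> 'm" where
  "mpow C f 0 = Idm C (Dom C f)"
| "mpow C f (Suc k) = Comp C (mpow C f k) f"

definition is_inverse :: "('o, 'm) icat \<Rightarrow> 'm \<Rightarrow> 'm \<Rightarrow> bool" where
  "is_inverse C f g \<longleftrightarrow> f \<in> Mor C \<and> g \<in> Hom C (Cod C f) (Dom C f)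
     \<and> Comp C f g = Idm C (Dom C f) \<and> Comp C g f = Idm C (Cod C f)"

definition invertible_mor :: "('o, 'm) icat \<Rightarrow> 'm \<Rightarrow> bool" where
  "invertible_mor C f \<longleftrightarrow> (\<exists>g. is_inverse C f g)"

definition annihilator :: "('o, 'm) icat \<Rightarrow> 'm \<Rightarrow> 'o \<Rightarrow> 'm \<Rightarrow> bool" where
  "annihilator C f N eta \<longleftrightarrow> N \<in> Ob C \<and> eta \<in> Hom C N (Dom C f)
     \<and> Comp C eta f = Zero C N (Cod C f)"

definition core_inverse :: "('o, 'm) icat \<Rightarrow> 'm \<Rightarrow> 'm \<Rightarrow> bool" where
  "core_inverse C f x \<longleftrightarrow> x \<in> Hom C (Dom C f) (Dom C f)
     \<and> Star C (Comp C f x) = Comp C f x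
     \<and> Comp C f (Comp C x x) = x
     \<and> Comp C x (Comp C f f) = f"

definition core_invertible :: "('o, 'm) icat \<Rightarrow> 'm \<Rightarrow> bool" where
  "core_invertible C f \<longleftrightarrow> (\<exists>x. core_inverse C f x)"

end

theory Submission
  imports Defs
begin

locale iac =
  fixes C :: "('o,'m) icat" and X :: 'o
  assumes inv: "is_involutive_additive C" and XOb: "X \<in> Ob C"
begin

lemma addv: "is_additive C" using inv unfolding is_involutive_additive_def by blast
lemma pre: "is_preadditive C" using addv unfolding is_additive_def by blast
lemma cat: "is_category C" using pre unfolding is_preadditive_def by blast

lemma hom_ob: "f \<in> Hom C A B \<Longrightarrow> A \<in> Ob C \<and> B \<in> Ob C"
  using cat unfolding is_category_def Hom_def by auto
lemma comp_hom: "f \<in> Hom C A B \<Longrightarrow> g \<in> Hom C B D \<Longrightarrow> Comp C f g \<in> Hom C A D"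
  using cat unfolding is_category_def Hom_def by auto
lemma assoc: "f \<in> Hom C A B \<Longrightarrow> g \<in> Hom C B D \<Longrightarrow> h \<in> Hom C D E \<Longrightarrow>
   Comp C (Comp C f g) h = Comp C f (Comp C g h)"
  using cat unfolding is_category_def Hom_def by auto
lemma id_hom: "A \<in> Ob C \<Longrightarrow> Idm C A \<in> Hom C A A"
  using cat unfolding is_category_def by auto
lemma idl: "f \<in> Hom C A B \<Longrightarrow> Comp C (Idm C A) f = f"
  using cat unfolding is_category_def Hom_def by auto
lemma idr: "f \<in> Hom C A B \<Longrightarrow> Comp C f (Idm C B) = f"
  using cat unfolding is_category_def Hom_def by auto

lemma zero_hom: "A \<in> Ob C \<Longrightarrow> B \<in> Ob C \<Longrightarrow> Zero C A B \<in> Hom C A B"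
  using pre unfolding is_preadditive_def by auto
lemma add_hom: "f \<in> Hom C A B \<Longrightarrow> g \<in> Hom C A B \<Longrightarrow> Add C f g \<in> Hom C A B"
  using pre hom_ob[of f A B] unfolding is_preadditive_def by blast
lemma neg_hom: "f \<in> Hom C A B \<Longrightarrow> Neg C f \<in> Hom C A B"
  using pre hom_ob[of f A B] unfolding is_preadditive_def by blast
lemma add_assoc: "f \<in> Hom C A B \<Longrightarrow> g \<in> Hom C A B \<Longrightarrow> h \<in> Hom C A B \<Longrightarrow>
   Add C (Add C f g) h = Add C f (Add C g h)"
  using pre hom_ob[of f A B] unfolding is_preadditive_def by blast
lemma add_comm: "f \<in> Hom C A B \<Longrightarrow> g \<in> Hom C A B \<Longrightarrow> Add C f g = Add C g f"
  using pre hom_ob[of f A B] unfolding is_preadditive_def by blast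
lemma zero_add: "f \<in> Hom C A B \<Longrightarrow> Add C (Zero C A B) f = f"
  using pre hom_ob[of f A B] unfolding is_preadditive_def by blast
lemma neg_add: "f \<in> Hom C A B \<Longrightarrow> Add C (Neg C f) f = Zero C A B"
  using pre hom_ob[of f A B] unfolding is_preadditive_def by blast
lemma distr_r: "f \<in> Hom C A B \<Longrightarrow> g \<in> Hom C A B \<Longrightarrow> h \<in> Hom C B D \<Longrightarrow>
   Comp C (Add C f g) h = Add C (Comp C f h) (Comp C g h)"
  using pre unfolding is_preadditive_def Hom_def by auto
lemma distr_l: "f \<in> Hom C A B \<Longrightarrow> g \<in> Hom C B D \<Longrightarrow> h \<in> Hom C B D \<Longrightarrow>
   Comp C f (Add C g h) = Add C (Comp C f g) (Comp C f h)"
  using pre unfolding is_preadditive_def Hom_def by auto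

lemma star_hom: "f \<in> Hom C A B \<Longrightarrow> Star C f \<in> Hom C B A"
  using inv unfolding is_involutive_additive_def Hom_def by auto
lemma star_star: "f \<in> Hom C A B \<Longrightarrow> Star C (Star C f) = f"
  using inv unfolding is_involutive_additive_def Hom_def by auto
lemma star_comp: "f \<in> Hom C A B \<Longrightarrow> g \<in> Hom C B D \<Longrightarrow>
   Star C (Comp C f g) = Comp C (Star C g) (Star C f)"
  using inv unfolding is_involutive_additive_def Hom_def by auto
lemma star_add: "f \<in> Hom C A B \<Longrightarrow> g \<in> Hom C A B \<Longrightarrow>
   Star C (Add C f g) = Add C (Star C f) (Star C g)"
  using inv unfolding is_involutive_additive_def Hom_def by auto

lemma add_zero: "f \<in> Hom C A B \<Longrightarrow> Add C f (Zero C A B) = f"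
  by (metis add_comm zero_add zero_hom hom_ob)

lemma cancel:
  assumes "x \<in> Hom C A B" "y \<in> Hom C A B" "a \<in> Hom C A B" "Add C x a = Add C y a"
  shows "x = y"
proof -
  have n: "Add C a (Neg C a) = Zero C A B" using assms(3) add_comm neg_add neg_hom by metis
  have "x = Add C x (Add C a (Neg C a))" using n add_zero assms by simp
  also have "\<dots> = Add C (Add C x a) (Neg C a)" using add_assoc assms neg_hom by metis
  also have "\<dots> = Add C (Add C y a) (Neg C a)" using assms by simp
  also have "\<dots> = Add C y (Add C a (Neg C a))" using add_assoc assms neg_hom by metis
  also have "\<dots> = y" using n add_zero assms by simp
  finally show ?thesis .
qed

lemma cancel0:
  assumes "x \<in> Hom C A B" "a \<in> Hom C A B" "Add C x a = a"
  shows "x = Zero C A B"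
  using cancel[OF assms(1) zero_hom assms(2)] assms hom_ob zero_add by metis

lemma zero_comp: "h \<in> Hom C B D \<Longrightarrow> A \<in> Ob C \<Longrightarrow> Comp C (Zero C A B) h = Zero C A D"
proof -
  assume h: "h \<in> Hom C B D" and A: "A \<in> Ob C"
  have B: "B \<in> Ob C" "D \<in> Ob C" using hom_ob h by auto
  have z: "Zero C A B \<in> Hom C A B" using A B zero_hom by auto
  have x: "Comp C (Zero C A B) h \<in> Hom C A D" using comp_hom z h by blast
  have "Add C (Comp C (Zero C A B) h) (Comp C (Zero C A B) h) = Comp C (Add C (Zero C A B) (Zero C A B)) h"
    using distr_r z h by metis
  also have "\<dots> = Comp C (Zero C A B) h" using zero_add z by simp
  finally show ?thesis using cancel0 x by blast
qed

lemma comp_zero: "f \<in> Hom C A B \<Longrightarrow> D \<in> Ob C \<Longrightarrow> Comp C f (Zero C B D) = Zero C A D"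
proof -
  assume h: "f \<in> Hom C A B" and D: "D \<in> Ob C"
  have B: "B \<in> Ob C" "A \<in> Ob C" using hom_ob h by auto
  have z: "Zero C B D \<in> Hom C B D" using D B zero_hom by auto
  have x: "Comp C f (Zero C B D) \<in> Hom C A D" using comp_hom z h by blast
  have "Add C (Comp C f (Zero C B D)) (Comp C f (Zero C B D)) = Comp C f (Add C (Zero C B D) (Zero C B D))"
    using distr_l z h by metis
  also have "\<dots> = Comp C f (Zero C B D)" using zero_add z by simp
  finally show ?thesis using cancel0 x by blast
qed

lemma star_id: "A \<in> Ob C \<Longrightarrow> Star C (Idm C A) = Idm C A"
proof -
  assume A: "A \<in> Ob C"
  have i: "Idm C A \<in> Hom C A A" using id_hom A by blast
  define s where "s = Star C (Idm C A)"
  have s: "s \<in> Hom C A A" using star_hom i s_def by blast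
  have "Star C (Comp C s (Idm C A)) = Comp C (Star C (Idm C A)) (Star C s)" using star_comp s i by blast
  also have "\<dots> = Comp C s (Idm C A)" using star_star i s_def by simp
  finally have "Star C s = s" using idr s by simp
  thus ?thesis using star_star i s_def by simp
qed

lemma star_zero: "A \<in> Ob C \<Longrightarrow> B \<in> Ob C \<Longrightarrow> Star C (Zero C A B) = Zero C B A"
proof -
  assume A: "A \<in> Ob C" and B: "B \<in> Ob C"
  have z: "Zero C A B \<in> Hom C A B" using A B zero_hom by auto
  have x: "Star C (Zero C A B) \<in> Hom C B A" using star_hom z by blast
  have "Add C (Star C (Zero C A B)) (Star C (Zero C A B)) = Star C (Add C (Zero C A B) (Zero C A B))"
    using star_add z by metis
  also have "\<dots> = Star C (Zero C A B)" using zero_add z by simp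
  finally show ?thesis using cancel0 x by blast
qed

lemma mpow_hom: "a \<in> Hom C X X \<Longrightarrow> mpow C a k \<in> Hom C X X"
proof (induction k)
  case 0 then show ?case using id_hom XOb by (simp add: Hom_def)
next
  case (Suc k) then show ?case using comp_hom by simp
qed

lemma mpow_1: "a \<in> Hom C X X \<Longrightarrow> mpow C a 1 = a"
proof -
  assume a: "a \<in> Hom C X X"
  have "Dom C a = X" using a by (simp add: Hom_def)
  thus ?thesis using idl[OF a] by simp
qed

lemma mpow_add: "a \<in> Hom C X X \<Longrightarrow> mpow C a (i + j) = Comp C (mpow C a i) (mpow C a j)"
proof (induction j)
  case 0
  have "Dom C a = X" using 0 by (simp add: Hom_def)
  then show ?case using idr[OF mpow_hom[OF 0, of i]] by simp
next
  case (Suc j) then show ?case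
    using assoc[OF mpow_hom[OF Suc.prems] mpow_hom[OF Suc.prems] Suc.prems] by simp
qed

lemma mpow_Suc_left: "a \<in> Hom C X X \<Longrightarrow> mpow C a (Suc k) = Comp C a (mpow C a k)"
  using mpow_add[of a 1 k] mpow_1 by simp

declare mpow.simps(2)[simp del]

lemma compX[simp]: "f \<in> Hom C X X \<Longrightarrow> g \<in> Hom C X X \<Longrightarrow> Comp C f g \<in> Hom C X X"
  using comp_hom by blast
lemma addX[simp]: "f \<in> Hom C X X \<Longrightarrow> g \<in> Hom C X X \<Longrightarrow> Add C f g \<in> Hom C X X"
  using add_hom by blast
lemma negX[simp]: "f \<in> Hom C X X \<Longrightarrow> Neg C f \<in> Hom C X X"
  using neg_hom by blast
lemma starX[simp]: "f \<in> Hom C X X \<Longrightarrow> Star C f \<in> Hom C X X"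
  using star_hom by blast
lemma idX[simp]: "Idm C X \<in> Hom C X X" using id_hom XOb by blast
lemma zeroX[simp]: "Zero C X X \<in> Hom C X X" using zero_hom XOb by blast
lemma assocX: "f \<in> Hom C X X \<Longrightarrow> g \<in> Hom C X X \<Longrightarrow> h \<in> Hom C X X \<Longrightarrow>
   Comp C (Comp C f g) h = Comp C f (Comp C g h)" using assoc by blast

lemma uniq:
  assumes a: "a \<in> Hom C X X" and n: "n \<ge> 2" and core: "core_inverse C a x"
    and ann: "annihilator C a N eta"
    and iv: "is_inverse C (Add C (mpow C a n) (Comp C (Star C eta) eta)) nu"
  shows "x = Comp C (mpow C a (n - 1)) nu"
proof -
  have Da: "Dom C a = X" "Cod C a = X" using a by (auto simp: Hom_def)
  have x: "x \<in> Hom C X X" and c2: "Star C (Comp C a x) = Comp C a x"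
    and c3: "Comp C a (Comp C x x) = x" and c4: "Comp C x (Comp C a a) = a"
    using core Da unfolding core_inverse_def by auto
  have N: "N \<in> Ob C" and eta: "eta \<in> Hom C N X" and ea: "Comp C eta a = Zero C N X"
    using ann Da unfolding annihilator_def by auto
  have ets: "Star C eta \<in> Hom C X N" using star_hom eta by blast
  have e: "Comp C (Star C eta) eta \<in> Hom C X X" using comp_hom ets eta by blast
  define mu where "mu = Add C (mpow C a n) (Comp C (Star C eta) eta)"
  have mu: "mu \<in> Hom C X X" unfolding mu_def using e a mpow_hom by simp
  have Dmu: "Dom C mu = X" "Cod C mu = X" using mu by (auto simp: Hom_def)
  have nu: "nu \<in> Hom C X X" and mn: "Comp C mu nu = Idm C X" and nm: "Comp C nu mu = Idm C X"
    using iv Dmu unfolding is_inverse_def mu_def[symmetric] by auto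
  have s2: "Comp C x (Comp C a x) = x"
  proof -
    have "Comp C x (Comp C a x) = Comp C x (Comp C a (Comp C a (Comp C x x)))" using c3 by simp
    also have "\<dots> = Comp C (Comp C x (Comp C a a)) (Comp C x x)" using assocX a x by simp
    also have "\<dots> = x" using c3 c4 by simp
    finally show ?thesis .
  qed
  have p: "Comp C a x \<in> Hom C X X" using a x by simp
  have ep: "Comp C eta (Comp C a x) = Zero C N X"
    using assoc[OF eta a x, symmetric] ea zero_comp[OF x N] by simp
  have pes: "Comp C (Comp C a x) (Star C eta) = Zero C X N"
    using arg_cong[OF ep, of "Star C"] star_comp[OF eta p] c2 star_zero[OF N XOb] by simp
  have xes: "Comp C x (Star C eta) = Zero C X N"
  proof -
    have "Comp C x (Star C eta) = Comp C (Comp C x (Comp C a x)) (Star C eta)" using s2 by simp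
    also have "\<dots> = Comp C x (Comp C (Comp C a x) (Star C eta))" using assoc[OF x p ets] .
    also have "\<dots> = Zero C X N" using pes comp_zero[OF x N] by simp
    finally show ?thesis .
  qed
  have xe: "Comp C x (Comp C (Star C eta) eta) = Zero C X X"
    using assoc[OF x ets eta, symmetric] xes zero_comp[OF eta XOb] by simp
  obtain m where m: "n = Suc (Suc m)" using n by (metis add_2_eq_Suc le_Suc_ex)
  have xan: "Comp C x (mpow C a n) = mpow C a (n - 1)"
  proof -
    have "mpow C a n = Comp C (Comp C a a) (mpow C a m)"
      using m mpow_Suc_left[OF a] assocX a mpow_hom by simp
    hence "Comp C x (mpow C a n) = Comp C (Comp C x (Comp C a a)) (mpow C a m)"
      using assocX a x mpow_hom by simp
    also have "\<dots> = mpow C a (n - 1)" using c4 m mpow_Suc_left[OF a] by simp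
    finally show ?thesis .
  qed
  have "Comp C x mu = mpow C a (n - 1)"
    unfolding mu_def using distr_l[OF x mpow_hom[OF a] e] xe xan add_zero mpow_hom[OF a] by simp
  hence "Comp C (Comp C x mu) nu = Comp C (mpow C a (n - 1)) nu" by simp
  moreover have "Comp C (Comp C x mu) nu = x" using assocX[OF x mu nu] mn idr x by simp
  ultimately show ?thesis by simp
qed

lemma backw:
  assumes a: "a \<in> Hom C X X" and n: "n \<ge> 2"
    and ann: "annihilator C a N eta"
    and iv: "is_inverse C (Add C (mpow C a n) (Comp C (Star C eta) eta)) nu"
  shows "core_inverse C a (Comp C (mpow C a (n - 1)) nu)"
proof -
  have Da: "Dom C a = X" "Cod C a = X" using a by (auto simp: Hom_def)
  have N: "N \<in> Ob C" and eta: "eta \<in> Hom C N X" and ea: "Comp C eta a = Zero C N X"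
    using ann Da unfolding annihilator_def by auto
  have ets: "Star C eta \<in> Hom C X N" using star_hom eta by blast
  define e where "e = Comp C (Star C eta) eta"
  have e: "e \<in> Hom C X X" unfolding e_def using comp_hom ets eta by blast
  define mu where "mu = Add C (mpow C a n) e"
  have mu: "mu \<in> Hom C X X" unfolding mu_def using e a mpow_hom by simp
  have Dmu: "Dom C mu = X" "Cod C mu = X" using mu by (auto simp: Hom_def)
  have nu: "nu \<in> Hom C X X" and mn: "Comp C mu nu = Idm C X" and nm: "Comp C nu mu = Idm C X"
    using iv Dmu unfolding is_inverse_def e_def[symmetric] mu_def[symmetric] by auto
  have pw: "\<And>k. mpow C a k \<in> Hom C X X" using mpow_hom a by blast
  have sa: "Star C a \<in> Hom C X X" using a by simp
  have eaz: "Comp C e a = Zero C X X"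
    unfolding e_def using assoc[OF ets eta a] ea comp_zero[OF ets XOb] by simp
  have aez: "Comp C (Star C a) e = Zero C X X"
  proof -
    have "Comp C (Star C a) e = Comp C (Comp C (Star C a) (Star C eta)) eta"
      unfolding e_def using assoc[OF sa ets eta] by simp
    also have "Comp C (Star C a) (Star C eta) = Zero C X N"
      using star_comp[OF eta a] ea star_zero[OF N XOb] by simp
    finally show ?thesis using zero_comp[OF eta XOb] by simp
  qed
  have es: "Star C e = e" unfolding e_def using star_comp[OF ets eta] star_star[OF eta] by simp
  define p where "p = Comp C (mpow C a n) nu"
  have p: "p \<in> Hom C X X" unfolding p_def using pw nu by simp
  have env: "Comp C e nu \<in> Hom C X X" using e nu by simp
  have one: "Add C p (Comp C e nu) = Idm C X"
    using mn unfolding mu_def p_def using distr_r[OF pw e nu] by simp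
  have s4: "Comp C (Star C a) p = Star C a"
  proof -
    have "Star C a = Comp C (Star C a) (Add C p (Comp C e nu))" using one idr sa by simp
    also have "\<dots> = Add C (Comp C (Star C a) p) (Comp C (Star C a) (Comp C e nu))"
      using distr_l[OF sa p env] .
    also have "Comp C (Star C a) (Comp C e nu) = Zero C X X"
      using assocX[OF sa e nu, symmetric] aez zero_comp[OF nu XOb] by simp
    finally show ?thesis using add_zero sa p by simp
  qed
  have s5: "Comp C (Star C p) a = a"
    using arg_cong[OF s4, of "Star C"] star_comp[OF sa p] star_star[OF a] by simp
  obtain m where m: "n = Suc (Suc m)" using n by (metis add_2_eq_Suc le_Suc_ex)
  have ep: "Comp C e p = Zero C X X"
  proof -
    have "mpow C a n = Comp C a (mpow C a (Suc m))"
      using m mpow_Suc_left[OF a, of "Suc m"] by simp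
    hence "Comp C e (mpow C a n) = Comp C (Comp C e a) (mpow C a (Suc m))"
      using assocX[OF e a pw] by simp
    hence "Comp C e (mpow C a n) = Zero C X X" using eaz zero_comp[OF pw XOb] by simp
    thus ?thesis unfolding p_def using assocX[OF e pw nu, symmetric] zero_comp[OF nu XOb] by simp
  qed
  have spe: "Comp C (Star C p) e = Zero C X X"
    using arg_cong[OF ep, of "Star C"] star_comp[OF e p] es star_zero[OF XOb XOb] by simp
  have s9: "Star C p = Comp C (Star C p) p"
  proof -
    have sp: "Star C p \<in> Hom C X X" using p by simp
    have "Star C p = Comp C (Star C p) (Add C p (Comp C e nu))" using one idr sp by simp
    also have "\<dots> = Add C (Comp C (Star C p) p) (Comp C (Star C p) (Comp C e nu))"
      using distr_l[OF sp p env] .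
    also have "Comp C (Star C p) (Comp C e nu) = Zero C X X"
      using assocX[OF sp e nu, symmetric] spe zero_comp[OF nu XOb] by simp
    finally show ?thesis using add_zero sp p by simp
  qed
  have s10: "Star C p = p"
  proof -
    have "p = Star C (Star C p)" using star_star p by simp
    also have "\<dots> = Star C (Comp C (Star C p) p)" using s9 by simp
    also have "\<dots> = Comp C (Star C p) p" using star_comp[OF starX[OF p] p] star_star[OF p] by simp
    finally show ?thesis using s9 by simp
  qed
  have s11: "Comp C p a = a" using s5 s10 by simp
  have s11r: "\<And>r. r \<in> Hom C X X \<Longrightarrow> Comp C p (Comp C a r) = Comp C a r"
    using s11 assocX[OF p a] by metis
  have s12: "Comp C p (mpow C a (n - 1)) = mpow C a (n - 1)"
    using m mpow_Suc_left[OF a] s11r pw by simp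
  have s13: "Comp C (mpow C a n) (Comp C nu a) = a"
    using s11 assocX[OF pw nu a] unfolding p_def by simp
  have s14: "Comp C nu (mpow C a (Suc n)) = a"
  proof -
    have "Comp C mu a = mpow C a (Suc n)"
      unfolding mu_def using distr_r[OF pw e a] eaz add_zero[OF compX[OF pw a]] by (simp add: mpow.simps(2))
    hence "Comp C nu (mpow C a (Suc n)) = Comp C (Comp C nu mu) a" using assocX[OF nu mu a] by simp
    thus ?thesis using nm idl a by simp
  qed
  have s15: "mpow C a (n - 1) = Comp C nu (Comp C (mpow C a (n - 1)) (mpow C a n))"
  proof -
    have "mpow C a (n - 1) = Comp C a (mpow C a m)" using m mpow_Suc_left[OF a] by simp
    also have "\<dots> = Comp C (Comp C nu (mpow C a (Suc n))) (mpow C a m)" using s14 by simp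
    also have "\<dots> = Comp C nu (mpow C a (Suc n + m))" using assocX[OF nu pw pw] mpow_add[OF a, of "Suc n" m] by simp
    also have "Suc n + m = (n - 1) + n" using m by simp
    finally show ?thesis using mpow_add[OF a] by simp
  qed
  define x where "x = Comp C (mpow C a (n - 1)) nu"
  have x: "x \<in> Hom C X X" unfolding x_def using pw nu by simp
  have ax: "Comp C a x = p"
    unfolding x_def p_def using assocX[OF a pw nu, symmetric] mpow_Suc_left[OF a, of "n - 1"] m by simp
  have c3: "Comp C a (Comp C x x) = x"
    using assocX[OF a x x, symmetric] ax assocX[OF p pw nu, symmetric] s12 unfolding x_def by simp
  have c4: "Comp C x (Comp C a a) = a"
  proof -
    have "Comp C x (Comp C a a) = Comp C (mpow C a (n - 1)) (Comp C nu (Comp C a a))"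
      unfolding x_def using assocX pw nu a by simp
    also have "\<dots> = Comp C nu (Comp C (mpow C a (n - 1)) (Comp C (mpow C a n) (Comp C nu (Comp C a a))))"
      apply (subst s15) using assocX pw nu a by simp
    also have "Comp C (mpow C a n) (Comp C nu (Comp C a a)) = Comp C a a"
      using assocX[OF pw nu compX[OF a a], symmetric] assocX[OF pw nu a, symmetric] s13
        assocX[OF compX[OF pw nu] a a, symmetric] a nu pw
      by (metis (no_types, lifting) compX)
    also have "Comp C (mpow C a (n - 1)) (Comp C a a) = mpow C a (Suc n)"
      by (metis m mpow.simps(2) diff_Suc_1 assocX pw a)
    finally show ?thesis using s14 by simp
  qed
  show ?thesis unfolding core_inverse_def using x Da ax s10 c3 c4 unfolding x_def by simp
qed

lemma powlem:
  assumes a: "a \<in> Hom C X X" and b: "b \<in> Hom C X X" and h: "Comp C a (Comp C b b) = b"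
  shows "Comp C (mpow C a (Suc k)) (mpow C b (Suc k)) = Comp C a b"
proof (induction k)
  case 0 then show ?case using mpow_1 a b by simp
next
  case (Suc k)
  have pa: "\<And>k. mpow C a k \<in> Hom C X X" using mpow_hom a by blast
  have pb: "\<And>k. mpow C b k \<in> Hom C X X" using mpow_hom b by blast
  have "Comp C a (mpow C b (Suc (Suc k))) = mpow C b (Suc k)"
  proof -
    have "Comp C a (mpow C b (Suc (Suc k))) = Comp C (Comp C a (Comp C b b)) (mpow C b k)"
      using mpow_Suc_left[OF b] assocX a b pb by simp
    thus ?thesis using h mpow_Suc_left[OF b] by simp
  qed
  moreover have "Comp C (mpow C a (Suc (Suc k))) (mpow C b (Suc (Suc k)))
      = Comp C (mpow C a (Suc k)) (Comp C a (mpow C b (Suc (Suc k))))"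
    by (simp only: mpow.simps(2)[of C a "Suc k"] assocX[OF pa a pb])
  ultimately show ?case using Suc by simp
qed

lemma compl_r:
  assumes "eta \<in> Hom C X X" "p \<in> Hom C X X" "r \<in> Hom C X X"
    "Add C eta p = Idm C X" "Comp C p r = r"
  shows "Comp C eta r = Zero C X X"
proof -
  have "Add C (Comp C eta r) (Comp C p r) = r" using distr_r[OF assms(1,2,3)] assms idl by simp
  thus ?thesis using cancel0 assms by simp
qed

lemma compl_l:
  assumes "eta \<in> Hom C X X" "p \<in> Hom C X X" "r \<in> Hom C X X"
    "Add C eta p = Idm C X" "Comp C r p = r"
  shows "Comp C r eta = Zero C X X"
proof -
  have "Add C (Comp C r eta) (Comp C r p) = r" using distr_l[OF assms(3,1,2)] assms idr by simp
  thus ?thesis using cancel0 assms by simp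
qed

lemma compl_mk:
  assumes "p \<in> Hom C X X"
  shows "Add C (Add C (Idm C X) (Neg C p)) p = Idm C X"
  using add_assoc[OF idX negX[OF assms] assms] neg_add[OF assms] add_zero[OF idX] by simp

lemma forw:
  assumes a: "a \<in> Hom C X X" and n: "n \<ge> 2" and core: "core_inverse C a x"
  shows "\<exists>N eta. annihilator C a N eta
              \<and> invertible_mor C (Add C (mpow C a n) (Comp C (Star C eta) eta))"
proof -
  have Da: "Dom C a = X" "Cod C a = X" using a by (auto simp: Hom_def)
  have x: "x \<in> Hom C X X" and c2: "Star C (Comp C a x) = Comp C a x"
    and c3: "Comp C a (Comp C x x) = x" and c4: "Comp C x (Comp C a a) = a"
    using core Da unfolding core_inverse_def by auto
  have pa: "\<And>k. mpow C a k \<in> Hom C X X" using mpow_hom a by blast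
  have px: "\<And>k. mpow C x k \<in> Hom C X X" using mpow_hom x by blast
  obtain m where m: "n = Suc (Suc m)" using n by (metis add_2_eq_Suc le_Suc_ex)
  define p where "p = Comp C a x"
  define q where "q = Comp C x a"
  have p: "p \<in> Hom C X X" and q: "q \<in> Hom C X X" unfolding p_def q_def using a x by auto
  have s1: "Comp C a (Comp C x a) = a"
  proof -
    have "Comp C a (Comp C x a) = Comp C a (Comp C x (Comp C x (Comp C a a)))" using c4 by simp
    also have "\<dots> = Comp C (Comp C a (Comp C x x)) (Comp C a a)" using assocX a x by simp
    also have "\<dots> = a" using c3 c4 by simp
    finally show ?thesis .
  qed
  have s2: "Comp C x (Comp C a x) = x"
  proof -
    have "Comp C x (Comp C a x) = Comp C x (Comp C a (Comp C a (Comp C x x)))" using c3 by simp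
    also have "\<dots> = Comp C (Comp C x (Comp C a a)) (Comp C x x)" using assocX a x by simp
    also have "\<dots> = x" using c3 c4 by simp
    finally show ?thesis .
  qed
  have pa1: "Comp C p a = a" unfolding p_def using s1 assocX a x by simp
  have pp: "Comp C p p = p" unfolding p_def using s2 assocX a x by simp
  have px1: "Comp C p x = x" unfolding p_def using c3 assocX a x by simp
  have xp: "Comp C x p = x" unfolding p_def using s2 by simp
  have qa: "Comp C q a = a" unfolding q_def using c4 assocX a x by simp
  have ps: "Star C p = p" unfolding p_def using c2 .
  define eta where "eta = Add C (Idm C X) (Neg C p)"
  define eta' where "eta' = Add C (Idm C X) (Neg C q)"
  have eta: "eta \<in> Hom C X X" and eta': "eta' \<in> Hom C X X" unfolding eta_def eta'_def using p q by auto
  have ep: "Add C eta p = Idm C X" unfolding eta_def using compl_mk p .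
  have eq: "Add C eta' q = Idm C X" unfolding eta'_def using compl_mk q .
  have ea: "Comp C eta a = Zero C X X" using compl_r[OF eta p a ep pa1] .
  have es: "Star C eta = eta"
  proof -
    have "Add C (Star C eta) p = Add C eta p"
      using arg_cong[OF ep, of "Star C"] star_add[OF eta p] ps star_id[OF XOb] ep by simp
    thus ?thesis using cancel[OF starX[OF eta] eta p] by simp
  qed
  have pe: "Comp C p eta = Zero C X X" using compl_l[OF eta p p ep pp] .
  have ee: "Comp C eta eta = eta"
  proof -
    have "Add C (Comp C eta eta) (Comp C p eta) = eta" using distr_r[OF eta p eta] ep idl eta by simp
    thus ?thesis using pe add_zero[OF compX[OF eta eta]] by simp
  qed
  have ann: "annihilator C a X eta" unfolding annihilator_def using XOb eta ea Da by simp
  define mu where "mu = Add C (mpow C a n) eta"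
  define nu where "nu = Add C (mpow C x n) eta'"
  have mu: "mu \<in> Hom C X X" and nu: "nu \<in> Hom C X X" unfolding mu_def nu_def using pa px eta eta' by auto
  have an_x: "mpow C a n = Comp C (mpow C a (Suc m)) a" using m by (simp add: mpow.simps(2))
  have an_a: "mpow C a n = Comp C a (mpow C a (Suc m))" using m mpow_Suc_left[OF a] by simp
  have xn_x: "mpow C x n = Comp C (mpow C x (Suc m)) x" using m by (simp add: mpow.simps(2))
  have xn_a: "mpow C x n = Comp C x (mpow C x (Suc m))" using m mpow_Suc_left[OF x] by simp
  have aq: "Comp C (mpow C a n) q = mpow C a n"
    unfolding q_def using an_x assocX pa a x s1 by simp
  have r1: "Comp C (mpow C a n) eta' = Zero C X X" using compl_l[OF eta' q pa eq aq] .
  have pxn: "Comp C p (mpow C x n) = mpow C x n"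
    using xn_a assocX[OF p x px, symmetric] px1 by simp
  have r2: "Comp C eta (mpow C x n) = Zero C X X" using compl_r[OF eta p px ep pxn] .
  have ex: "Comp C eta x = Zero C X X" using compl_r[OF eta p x ep px1] .
  have eqz: "Comp C eta q = Zero C X X"
    unfolding q_def using assocX[OF eta x a, symmetric] ex zero_comp[OF a XOb] by simp
  have r3: "Comp C eta eta' = eta"
  proof -
    have "Add C (Comp C eta eta') (Comp C eta q) = eta" using distr_l[OF eta eta' q] eq idr eta by simp
    thus ?thesis using eqz add_zero[OF compX[OF eta eta']] by simp
  qed
  have r4: "Comp C (mpow C a n) (mpow C x n) = p"
    using powlem[OF a x c3, of "Suc m"] m unfolding p_def by simp
  have xnp: "Comp C (mpow C x n) p = mpow C x n"
    using xn_x assocX[OF px x p] xp by simp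
  have r5: "Comp C (mpow C x n) eta = Zero C X X" using compl_l[OF eta p px ep xnp] .
  have qan: "Comp C q (mpow C a n) = mpow C a n"
    using an_a assocX[OF q a pa, symmetric] qa by simp
  have r6: "Comp C eta' (mpow C a n) = Zero C X X" using compl_r[OF eta' q pa eq qan] .
  have qa': "Comp C q a = a" using qa .
  have e'a: "Comp C eta' a = Zero C X X" using compl_r[OF eta' q a eq qa] .
  have e'p: "Comp C eta' p = Zero C X X"
    unfolding p_def using assocX[OF eta' a x, symmetric] e'a zero_comp[OF x XOb] by simp
  have r7: "Comp C eta' eta = eta'"
  proof -
    have "Add C (Comp C eta' eta) (Comp C eta' p) = eta'" using distr_l[OF eta' eta p] ep idr eta' by simp
    thus ?thesis using e'p add_zero[OF compX[OF eta' eta]] by simp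
  qed
  have r8: "Comp C (mpow C x n) (mpow C a n) = q"
    using powlem[OF x a c4, of "Suc m"] m unfolding q_def by simp
  have mn: "Comp C mu nu = Idm C X"
  proof -
    have "Comp C mu nu = Add C (Add C (Comp C (mpow C a n) (mpow C x n)) (Comp C (mpow C a n) eta'))
        (Add C (Comp C eta (mpow C x n)) (Comp C eta eta'))"
      unfolding mu_def nu_def using distr_r[OF pa eta nu] distr_l[OF pa px eta'] distr_l[OF eta px eta']
      unfolding nu_def by simp
    also have "\<dots> = Add C p eta" using r4 r1 r2 r3 add_zero p zero_add eta by simp
    finally show ?thesis using ep add_comm eta p by simp
  qed
  have nm: "Comp C nu mu = Idm C X"
  proof -
    have "Comp C nu mu = Add C (Add C (Comp C (mpow C x n) (mpow C a n)) (Comp C (mpow C x n) eta))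
        (Add C (Comp C eta' (mpow C a n)) (Comp C eta' eta))"
      unfolding mu_def nu_def using distr_r[OF px eta' mu] distr_l[OF px pa eta] distr_l[OF eta' pa eta]
      unfolding mu_def by simp
    also have "\<dots> = Add C q eta'" using r8 r5 r6 r7 add_zero q zero_add eta' by simp
    finally show ?thesis using eq add_comm eta' q by simp
  qed
  have Dmu: "Dom C mu = X" "Cod C mu = X" "mu \<in> Mor C" using mu by (auto simp: Hom_def)
  have "invertible_mor C (Add C (mpow C a n) (Comp C (Star C eta) eta))"
    unfolding invertible_mor_def is_inverse_def using es ee mu_def Dmu nu mn nm by auto
  thus ?thesis using ann by blast
qed

end

theorem theorem2p8:
  fixes C :: "('o, 'm) icat" and X :: 'o and phi :: 'm and n :: nat
  assumes "is_involutive_additive C"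
    and "X \<in> Ob C" and "phi \<in> Hom C X X" and "n \<ge> 2"
  shows "(core_invertible C phi \<longleftrightarrow>
           (\<exists>N eta. annihilator C phi N eta
              \<and> invertible_mor C (Add C (mpow C phi n) (Comp C (Star C eta) eta))))
       \<and> (\<forall>N eta chi nu. core_inverse C phi chi \<longrightarrow> annihilator C phi N eta \<longrightarrow>
           is_inverse C (Add C (mpow C phi n) (Comp C (Star C eta) eta)) nu \<longrightarrow>
           chi = Comp C (mpow C phi (n - 1)) nu)"
proof -
  interpret iac C X using assms(1,2) by unfold_locales
  show ?thesis
    using forw[OF assms(3,4)] backw[OF assms(3,4)] uniq[OF assms(3,4)]
    unfolding core_invertible_def invertible_mor_def by blast
qed

end
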